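(* Let $I=(\mathcal{M},[N],(u_i)_{i\in[N]})$ be a non-negative instance with $\mathcal{M}\ne\emptyset$ and let $(S_1,\ldots,S_N)$ be the allocation produced by the round-robin greedy protocol for $I$. Then for all $i\in[N]$, $$u_i(S_i)\le\Big(2-\frac1N\Big)\cdot mMS_{u_i}^N(\mathcal{M}).$$ Moreover the constant $2-\frac1N$ cannot be improved: for every $N\ge1$ there is a non-negative instance with $N$ agents for which the protocol yields an agent $i$ with $u_i(S_i)=\big(2-\frac1N\big)\,mMS_{u_i}^N(\mathcal{M})>0$.
   Context: A non-negative instance: finite item set $\mathcal{M}$, agents $[N]=\{1,\dots,N\}$, additive utilities $u_i$ with $u_i(j)\ge0$. $\Pi_N(\mathcal{M})$ is the set of ordered $N$-partitions of $\mathcal{M}$ (parts may be empty); $mMS_{u}^N(\mathcal{M}):=\min_{(T_1,\ldots,T_N)\in\Pi_N(\mathcal{M})}\max_{j} u(T_j)$. The round-robin greedy protocol: agents pick in the fixed order $1,2,\dots,N,1,2,\dots$; at her turn agent $i$ receives an item of lowest utility $u_i$ among the unallocated items (ties broken arbitrarily), until all items are allocated; $S_i$ is the set agent $i$ receives. *)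

theory Defs
  imports Complex_Main
begin

(* Agents are 1..N. The k-th pick (0-indexed) is made by agent (k mod N) + 1. *)
definition rr_agent :: "nat \<Rightarrow> nat \<Rightarrow> nat" where
  "rr_agent N k = k mod N + 1"

(* xs is a possible run of the round-robin greedy protocol: the items in pick order,
   each item picked having lowest utility for the picking agent among the
   still unallocated items (arbitrary tie-breaking), until all of M is allocated. *)
definition rr_greedy_run :: "nat \<Rightarrow> 'a set \<Rightarrow> (nat \<Rightarrow> 'a \<Rightarrow> real) \<Rightarrow> 'a list \<Rightarrow> bool" where
  "rr_greedy_run N M u xs \<longleftrightarrow>
     distinct xs \<and> set xs = M \<and>
     (\<forall>k < length xs. \<forall>y \<in> M - set (take k xs).
        u (rr_agent N k) (xs ! k) \<le> u (rr_agent N k) y)"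

definition rr_bundle :: "nat \<Rightarrow> 'a list \<Rightarrow> nat \<Rightarrow> 'a set" where
  "rr_bundle N xs i = {xs ! k | k. k < length xs \<and> rr_agent N k = i}"

definition is_ordered_partition :: "nat \<Rightarrow> 'a set \<Rightarrow> (nat \<Rightarrow> 'a set) \<Rightarrow> bool" where
  "is_ordered_partition N M T \<longleftrightarrow>
     (\<Union>j\<in>{1..N}. T j) = M \<and>
     (\<forall>j\<in>{1..N}. \<forall>l\<in>{1..N}. j \<noteq> l \<longrightarrow> T j \<inter> T l = {})"

definition mMS :: "nat \<Rightarrow> ('a \<Rightarrow> real) \<Rightarrow> 'a set \<Rightarrow> real" where
  "mMS N v M = Min {Max ((\<lambda>j. sum v (T j)) ` {1..N}) | T. is_ordered_partition N M T}"

end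

theory Submission
  imports Defs "HOL-Library.FuncSet"
begin
lemma key_ind:
  fixes f :: "nat \<Rightarrow> real"
  assumes N: "N \<ge> 1"
    and mono: "\<And>k k'. k < m \<Longrightarrow> k mod N = c \<Longrightarrow> k \<le> k' \<Longrightarrow> k' < m \<Longrightarrow> f k \<le> f k'"
    and c: "c < N"
  shows "K*N+c < m \<Longrightarrow> real N * (\<Sum>t\<le>K. f (t*N+c)) \<le> sum f {c..<K*N+c} + real N * f (K*N+c)"
proof (induction K)
  case 0
  then show ?case by simp
next
  case (Suc K)
  let ?p = "K*N+c"
  have lt: "?p < m" using Suc.prems N by simp
  have IH: "real N * (\<Sum>t\<le>K. f (t*N+c)) \<le> sum f {c..<?p} + real N * f ?p" using Suc.IH lt by simp
  have blk: "real N * f ?p \<le> sum f {?p..<?p+N}"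
  proof -
    have "real (card {?p..<?p+N}) * f ?p \<le> sum f {?p..<?p+N}"
      apply (rule sum_bounded_below)
      apply (rule mono)
      using lt Suc.prems c by (auto simp: mod_eq_self_iff_div_eq_0 algebra_simps)
    then show ?thesis by simp
  qed
  have cat: "sum f {c..<Suc K*N+c} = sum f {c..<?p} + sum f {?p..<?p+N}"
    using sum.atLeastLessThan_concat[of c ?p "?p+N" f] by (simp add: algebra_simps)
  show ?case using IH blk cat by (simp add: algebra_simps)
qed


lemma key:
  fixes f :: "nat \<Rightarrow> real"
  assumes N: "N \<ge> 1"
    and mono: "\<And>k k'. k < m \<Longrightarrow> k mod N = c \<Longrightarrow> k \<le> k' \<Longrightarrow> k' < m \<Longrightarrow> f k \<le> f k'"
    and c: "c < N"
    and nn: "\<And>k. k < m \<Longrightarrow> 0 \<le> f k"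
    and B: "\<And>k. k < m \<Longrightarrow> f k \<le> B" "0 \<le> B"
  shows "real N * sum f {k. k < m \<and> k mod N = c} \<le> sum f {..<m} + (real N - 1) * B"
proof (cases "c < m")
  case False
  then have "{k. k < m \<and> k mod N = c} = {}" by (auto, metis mod_le_divisor mod_less_eq_dividend le_trans not_less)
  then have z: "sum f {k. k < m \<and> k mod N = c} = 0" by (metis sum.empty)
  have "0 \<le> sum f {..<m}" using nn by (intro sum_nonneg) auto
  moreover have "0 \<le> (real N - 1) * B" using B(2) N by simp
  ultimately show ?thesis unfolding z by simp
next
  case True
  define K where "K = (m - 1 - c) div N"
  have "K*N \<le> m - 1 - c" unfolding K_def by (rule div_times_less_eq_dividend)
  then have Klt: "K*N+c < m" using True by linarith
  have eqset: "{k. k < m \<and> k mod N = c} = (\<lambda>t. t*N+c) ` {..K}"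
  proof (intro set_eqI iffI)
    fix k assume k: "k \<in> {k. k < m \<and> k mod N = c}"
    then have "k = (k div N)*N + c" using div_mult_mod_eq[of k N] by simp
    moreover have "k div N \<le> K"
    proof -
      have km: "k < m" "k mod N = c" using k by auto
      have "(k div N)*N \<le> m - 1 - c" using km div_mult_mod_eq[of k N] by linarith
      then have "((k div N)*N) div N \<le> (m - 1 - c) div N" by (rule div_le_mono)
      then show ?thesis unfolding K_def using N by simp
    qed
    ultimately show "k \<in> (\<lambda>t. t*N+c) ` {..K}" by blast
  next
    fix k assume "k \<in> (\<lambda>t. t*N+c) ` {..K}"
    then obtain t where t: "t \<le> K" "k = t*N+c" by auto
    have "t*N+c \<le> K*N+c" using t by simp
    then have "k < m" using t Klt by linarith
    moreover have "k mod N = c" using t c by simp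
    ultimately show "k \<in> {k. k < m \<and> k mod N = c}" by simp
  qed
  have inj: "inj_on (\<lambda>t. t*N+c) {..K}" using N by (auto simp: inj_on_def)
  have s: "sum f {k. k < m \<and> k mod N = c} = (\<Sum>t\<le>K. f (t*N+c))"
    unfolding eqset sum.reindex[OF inj] o_def ..
  have I: "real N * (\<Sum>t\<le>K. f (t*N+c)) \<le> sum f {c..<K*N+c} + real N * f (K*N+c)"
    by (rule key_ind[OF N mono c Klt]) auto
  have "sum f {c..<K*N+c} + f (K*N+c) = sum f {c..<Suc (K*N+c)}" by simp
  also have "\<dots> \<le> sum f {..<m}"
    apply (rule sum_mono2) using Klt nn by auto
  finally have a: "sum f {c..<K*N+c} + f (K*N+c) \<le> sum f {..<m}" .
  have b: "(real N - 1) * f (K*N+c) \<le> (real N - 1) * B"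
    using B(1)[OF Klt] N by (intro mult_left_mono) auto
  show ?thesis using s I a b by (simp add: algebra_simps)
qed

lemma part_bounds:
  fixes v :: "'a \<Rightarrow> real"
  assumes P: "is_ordered_partition N M T" and fin: "finite M" and nn: "\<And>j. j \<in> M \<Longrightarrow> 0 \<le> v j"
    and N: "N \<ge> 1"
  shows "sum v M \<le> real N * Max ((\<lambda>j. sum v (T j)) ` {1..N})"
    and "x \<in> M \<Longrightarrow> v x \<le> Max ((\<lambda>j. sum v (T j)) ` {1..N})"
proof -
  have U: "(\<Union>j\<in>{1..N}. T j) = M" and D: "\<And>j l. j\<in>{1..N} \<Longrightarrow> l\<in>{1..N} \<Longrightarrow> j \<noteq> l \<Longrightarrow> T j \<inter> T l = {}"
    using P unfolding is_ordered_partition_def by auto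
  have sub: "\<And>j. j \<in> {1..N} \<Longrightarrow> T j \<subseteq> M" using U by blast
  have finT: "\<And>j. j \<in> {1..N} \<Longrightarrow> finite (T j)" using sub fin finite_subset by blast
  let ?Mx = "Max ((\<lambda>j. sum v (T j)) ` {1..N})"
  have le: "\<And>j. j \<in> {1..N} \<Longrightarrow> sum v (T j) \<le> ?Mx" by (rule Max_ge) auto
  have "sum v M = (\<Sum>j\<in>{1..N}. sum v (T j))"
    unfolding U[symmetric] by (rule sum.UNION_disjoint) (simp, use finT in blast, use D in blast)
  also have "\<dots> \<le> (\<Sum>j\<in>{1..N}. ?Mx)" by (rule sum_mono) (rule le)
  also have "\<dots> = real N * ?Mx" by simp
  finally show "sum v M \<le> real N * ?Mx" .
  assume x: "x \<in> M"
  then obtain j where j: "j \<in> {1..N}" "x \<in> T j" using U by blast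
  have "v x \<le> sum v (T j)" using j finT sub nn by (intro member_le_sum) auto
  also have "\<dots> \<le> ?Mx" using le j by simp
  finally show "v x \<le> ?Mx" .
qed

lemma mMS_set_fin_ne:
  fixes v :: "'a \<Rightarrow> real"
  assumes fin: "finite M" and N: "N \<ge> 1"
  shows "finite {Max ((\<lambda>j. sum v (T j)) ` {1..N}) | T. is_ordered_partition N M T}"
    and "{Max ((\<lambda>j. sum v (T j)) ` {1..N}) | T. is_ordered_partition N M T} \<noteq> {}"
proof -
  let ?g = "\<lambda>T. Max ((\<lambda>j. sum v (T j)) ` {1..N})"
  have "{?g T | T. is_ordered_partition N M T} \<subseteq> ?g ` (PiE {1..N} (\<lambda>_. Pow M))"
  proof
    fix y assume "y \<in> {?g T | T. is_ordered_partition N M T}"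
    then obtain T where T: "is_ordered_partition N M T" "y = ?g T" by auto
    have "restrict T {1..N} \<in> PiE {1..N} (\<lambda>_. Pow M)"
      using T(1) unfolding is_ordered_partition_def by auto
    moreover have "?g (restrict T {1..N}) = ?g T"
      by (intro arg_cong[where f=Max] image_cong) auto
    then have "y = ?g (restrict T {1..N})" using T(2) by simp
    ultimately show "y \<in> ?g ` (PiE {1..N} (\<lambda>_. Pow M))"
      using image_eqI[where f="?g" and x="restrict T {1..N}" and b=y and A="PiE {1..N} (\<lambda>_. Pow M)"] by blast
  qed
  moreover have "finite (PiE {1..N} (\<lambda>_. Pow M))" using fin by (intro finite_PiE) auto
  ultimately show "finite {?g T | T. is_ordered_partition N M T}" by (meson finite_imageI finite_subset)
  have "is_ordered_partition N M (\<lambda>j. if j = 1 then M else {})"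
    unfolding is_ordered_partition_def using N by auto
  then show "{?g T | T. is_ordered_partition N M T} \<noteq> {}" by blast
qed

lemma mMS_ge:
  fixes v :: "'a \<Rightarrow> real"
  assumes fin: "finite M" and N: "N \<ge> 1"
    and H: "\<And>T. is_ordered_partition N M T \<Longrightarrow> L \<le> Max ((\<lambda>j. sum v (T j)) ` {1..N})"
  shows "L \<le> mMS N v M"
  unfolding mMS_def using mMS_set_fin_ne[OF fin N, of v] H
  by (subst Min_ge_iff) auto

lemma mMS_le:
  fixes v :: "'a \<Rightarrow> real"
  assumes fin: "finite M" and N: "N \<ge> 1" and P: "is_ordered_partition N M T"
  shows "mMS N v M \<le> Max ((\<lambda>j. sum v (T j)) ` {1..N})"
  unfolding mMS_def using mMS_set_fin_ne[OF fin N, of v] P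
  by (intro Min_le) auto

lemma part1:
  fixes u :: "nat \<Rightarrow> 'a \<Rightarrow> real"
  assumes N: "N \<ge> 1" and fin: "finite M" and ne: "M \<noteq> {}"
    and nn: "\<forall>i\<in>{1..N}. \<forall>j\<in>M. u i j \<ge> 0" and run: "rr_greedy_run N M u xs"
    and i: "i \<in> {1..N}"
  shows "sum (u i) (rr_bundle N xs i) \<le> (2 - 1 / real N) * mMS N (u i) M"
proof -
  define m where "m = length xs"
  define c where "c = i - 1"
  define f where "f k = u i (xs ! k)" for k
  have dist: "distinct xs" and setxs: "set xs = M"
    and gr: "\<And>k y. k < m \<Longrightarrow> y \<in> M - set (take k xs) \<Longrightarrow> u (rr_agent N k) (xs ! k) \<le> u (rr_agent N k) y"
    using run unfolding rr_greedy_run_def m_def by auto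
  have c: "c < N" using i unfolding c_def by auto
  have ag: "\<And>k. rr_agent N k = i \<longleftrightarrow> k mod N = c" using i unfolding rr_agent_def c_def by auto
  have bund: "rr_bundle N xs i = nth xs ` {k. k < m \<and> k mod N = c}"
    unfolding rr_bundle_def m_def using ag by auto
  have S: "sum (u i) (rr_bundle N xs i) = sum f {k. k < m \<and> k mod N = c}"
    unfolding bund f_def by (rule sum.reindex_cong[OF inj_on_nth[OF dist]]) (auto simp: m_def)
  have Mx: "M = nth xs ` {..<m}" unfolding setxs[symmetric] m_def
    by (auto simp: in_set_conv_nth)
  have tot: "sum (u i) M = sum f {..<m}"
    unfolding Mx f_def by (rule sum.reindex_cong[OF inj_on_nth[OF dist]]) (auto simp: m_def)
  have inM: "\<And>k. k < m \<Longrightarrow> xs ! k \<in> M" using setxs m_def nth_mem by blast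
  have fnn: "\<And>k. k < m \<Longrightarrow> 0 \<le> f k" using nn i inM unfolding f_def by blast
  have mono: "f k \<le> f k'" if "k < m" "k mod N = c" "k \<le> k'" "k' < m" for k k'
  proof -
    have "xs ! k' \<notin> set (take k xs)"
    proof
      assume "xs ! k' \<in> set (take k xs)"
      then obtain j where j: "j < length (take k xs)" "take k xs ! j = xs ! k'"
        by (auto simp: in_set_conv_nth)
      then have "j < k" "xs ! j = xs ! k'" by auto
      then have "j = k'" using dist that unfolding m_def by (simp add: nth_eq_iff_index_eq)
      then show False using \<open>j < k\<close> that by simp
    qed
    then have "u (rr_agent N k) (xs ! k) \<le> u (rr_agent N k) (xs ! k')"
      using gr[OF that(1)] inM[OF that(4)] by blast
    moreover have "rr_agent N k = i" using ag that(2) by blast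
    ultimately show ?thesis unfolding f_def by simp
  qed
  define B where "B = mMS N (u i) M"
  have nnv: "\<And>j. j \<in> M \<Longrightarrow> 0 \<le> u i j" using nn i by blast
  have h1: "sum (u i) M / real N \<le> B" unfolding B_def
  proof (rule mMS_ge[OF fin N])
    fix T assume T: "is_ordered_partition N M T"
    have "sum (u i) M \<le> real N * Max ((\<lambda>j. sum (u i) (T j)) ` {1..N})"
      by (rule part_bounds(1)[OF T fin nnv N])
    then show "sum (u i) M / real N \<le> Max ((\<lambda>j. sum (u i) (T j)) ` {1..N})"
      using N by (simp add: divide_le_eq mult.commute)
  qed
  have h2: "f k \<le> B" if "k < m" for k unfolding B_def f_def
  proof (rule mMS_ge[OF fin N])
    fix T assume T: "is_ordered_partition N M T"
    show "u i (xs ! k) \<le> Max ((\<lambda>j. sum (u i) (T j)) ` {1..N})"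
      by (rule part_bounds(2)[OF T fin nnv N inM[OF that]])
  qed
  have m0: "0 < m" using ne setxs m_def by auto
  have B0: "0 \<le> B" using h2[OF m0] fnn[OF m0] by linarith
  have K: "real N * sum f {k. k < m \<and> k mod N = c} \<le> sum f {..<m} + (real N - 1) * B"
    by (rule key[OF N mono c fnn h2 B0]) auto
  have h1': "sum f {..<m} \<le> real N * B" using h1 tot N by (simp add: divide_le_eq mult.commute)
  have "real N * sum (u i) (rr_bundle N xs i) \<le> real N * ((2 - 1 / real N) * B)"
    using K h1' S N by (simp add: algebra_simps)
  then show ?thesis unfolding B_def[symmetric] using N by simp
qed


lemma blk1: "(N::nat) > 0 \<Longrightarrow> a*N \<le> k \<Longrightarrow> k < (a+1)*N \<Longrightarrow> k div N = a"
  by (simp add: div_nat_eqI mult.commute)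
lemma blk2: "(N::nat) > 0 \<Longrightarrow> k < (k div N+1)*N"
  by (simp add: dividend_less_div_times)
lemma blk_iff: "(N::nat) > 0 \<Longrightarrow> k \<in> {a*N..<(a+1)*N} \<longleftrightarrow> k div N = a"
  using blk1[of N a k] blk2[of N k] by auto

lemma set_mult: "(N::nat) \<ge> 1 \<Longrightarrow> {k. k < N*(N-1) \<and> k mod N = 0} = (\<lambda>t. t*N) ` {..<N-1}"
proof (intro set_eqI iffI)
  fix k assume N: "N \<ge> 1" and k: "k \<in> {k. k < N*(N-1) \<and> k mod N = 0}"
  then have "k = (k div N) * N" by auto
  moreover have "k div N < N - 1" using k N
    by (simp add: less_mult_imp_div_less mult.commute)
  ultimately show "k \<in> (\<lambda>t. t*N) ` {..<N-1}" by blast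
next
  fix k assume N: "N \<ge> 1" and k: "k \<in> (\<lambda>t. t*N) ` {..<N-1}"
  then obtain t where t: "t < N - 1" "k = t*N" by auto
  then have "k < N*(N-1)" using N by (simp add: mult.commute)
  then show "k \<in> {k. k < N*(N-1) \<and> k mod N = 0}" using t by simp
qed

lemma card_mult: "(N::nat) \<ge> 1 \<Longrightarrow> card {k. k < N*(N-1) \<and> k mod N = 0} = N - 1"
  apply (subst set_mult, assumption)
  apply (subst card_image)
   apply (auto simp: inj_on_def)
  done


lemma part2:
  assumes N: "(N::nat) \<ge> 1"
  shows "\<exists>(M::nat set) (u::nat \<Rightarrow> nat \<Rightarrow> real) xs i.
               finite M \<and> (\<forall>i\<in>{1..N}. \<forall>j\<in>M. u i j \<ge> 0) \<and>
               rr_greedy_run N M u xs \<and> i \<in> {1..N} \<and>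
               sum (u i) (rr_bundle N xs i) = (2 - 1 / real N) * mMS N (u i) M \<and>
               mMS N (u i) M > 0"
proof -
  define L where "L = N*(N-1)"
  define M where "M = {..L}"
  define u where "u = (\<lambda>(i::nat) (j::nat). if j = L then real N else 1)"
  define xs where "xs = [0..<L+1]"
  have lenx: "length xs = L+1" unfolding xs_def by simp
  have nthx: "\<And>k. k < L+1 \<Longrightarrow> xs ! k = k" unfolding xs_def using nth_upt[of 0 _ "L+1"] by simp
  have fin: "finite M" unfolding M_def by simp
  have nn: "\<forall>i\<in>{1..N}. \<forall>j\<in>M. u i j \<ge> 0" unfolding u_def by auto
  have run: "rr_greedy_run N M u xs"
    unfolding rr_greedy_run_def
  proof (intro conjI allI impI ballI)
    show "distinct xs" unfolding xs_def by simp
    show "set xs = M" unfolding xs_def M_def by auto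
    fix k y assume k: "k < length xs" and y: "y \<in> M - set (take k xs)"
    have xk: "xs ! k = k" using k lenx nthx by simp
    have "take k xs = [0..<k]" using k unfolding xs_def by (simp add: take_upt)
    then have yk: "k \<le> y" "y \<le> L" using y unfolding M_def by auto
    show "u (rr_agent N k) (xs ! k) \<le> u (rr_agent N k) y"
      unfolding xk u_def using yk N by auto
  qed
  have bund: "rr_bundle N xs 1 = insert L {k. k < L \<and> k mod N = 0}"
  proof -
    have "rr_bundle N xs 1 = {xs ! k | k. k < L+1 \<and> k mod N = 0}"
      unfolding rr_bundle_def rr_agent_def lenx by simp
    also have "\<dots> = {k. k < L+1 \<and> k mod N = 0}" using nthx by force
    also have "\<dots> = insert L {k. k < L \<and> k mod N = 0}"
      unfolding L_def by auto
    finally show ?thesis .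
  qed
  have L0: "L \<notin> {k. k < L \<and> k mod N = 0}" by simp
  have s1: "sum (u 1) {k. k < L \<and> k mod N = 0} = real (N - 1)"
  proof -
    have "sum (u 1) {k. k < L \<and> k mod N = 0} = sum (\<lambda>_. 1) {k. k < L \<and> k mod N = 0}"
      by (rule sum.cong) (auto simp: u_def)
    also have "\<dots> = real (N - 1)" using card_mult[OF N] unfolding L_def by simp
    finally show ?thesis .
  qed
  have sb: "sum (u 1) (rr_bundle N xs 1) = 2 * real N - 1"
    unfolding bund using s1 L0 N by (simp add: u_def of_nat_diff)
  define T where "T = (\<lambda>j::nat. if j = 1 then {L} else {(j-2)*N..<(j-1)*N})"
  have Tsub: "\<And>j. j \<in> {1..N} \<Longrightarrow> T j \<subseteq> M"
  proof -
    fix j assume j: "j \<in> {1..N}"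
    have "(j-1)*N \<le> (N-1)*N" using j by (intro mult_right_mono) auto
    then have h: "(j-1)*N \<le> L" unfolding L_def by (simp add: mult.commute)
    then show "T j \<subseteq> M" unfolding T_def M_def by auto
  qed
  have LT: "\<And>j. j \<in> {1..N} \<Longrightarrow> j \<noteq> 1 \<Longrightarrow> L \<notin> T j"
  proof -
    fix j assume j: "j \<in> {1..N}" "j \<noteq> 1"
    have "(j-1)*N \<le> (N-1)*N" using j by (intro mult_right_mono) auto
    then have h: "(j-1)*N \<le> L" unfolding L_def by (simp add: mult.commute)
    then show "L \<notin> T j" unfolding T_def using j by auto
  qed
  have part: "is_ordered_partition N M T"
    unfolding is_ordered_partition_def
  proof (intro conjI ballI impI)
    show "(\<Union>j\<in>{1..N}. T j) = M"
    proof
      show "(\<Union>j\<in>{1..N}. T j) \<subseteq> M" using Tsub by blast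
      show "M \<subseteq> (\<Union>j\<in>{1..N}. T j)"
      proof
        fix k assume k: "k \<in> M"
        show "k \<in> (\<Union>j\<in>{1..N}. T j)"
        proof (cases "k = L")
          case True then show ?thesis unfolding T_def using N by auto
        next
          case False
          then have kL: "k < N*(N-1)" using k unfolding M_def L_def by auto
          then have "k div N < N - 1" by (simp add: less_mult_imp_div_less mult.commute)
          moreover have "k \<in> T (k div N + 2)"
            unfolding T_def using blk_iff[of N k "k div N"] N by simp
          ultimately show ?thesis by (intro UN_I[of "k div N + 2"]) auto
        qed
      qed
    qed
  next
    fix j l assume j: "j \<in> {1..N}" and l: "l \<in> {1..N}" and jl: "j \<noteq> l"
    show "T j \<inter> T l = {}"
    proof (cases "j = 1 \<or> l = 1")
      case True then show ?thesis using LT j l jl by (auto simp: T_def)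
    next
      case False
      then have "T j = {(j-2)*N..<(j-2+1)*N}" "T l = {(l-2)*N..<(l-2+1)*N}"
        using j l unfolding T_def by (auto simp: Suc_diff_Suc numeral_2_eq_2)
      moreover have "x \<notin> T j \<inter> T l" for x
      proof
        assume "x \<in> T j \<inter> T l"
        then have "x div N = j-2" "x div N = l-2"
          using blk_iff[of N x "j-2"] blk_iff[of N x "l-2"] N calculation by auto
        then show False using jl j l False by auto
      qed
      ultimately show ?thesis by blast
    qed
  qed
  have Tval: "\<And>j. j \<in> {1..N} \<Longrightarrow> sum (u 1) (T j) = real N"
  proof -
    fix j assume j: "j \<in> {1..N}"
    show "sum (u 1) (T j) = real N"
    proof (cases "j = 1")
      case True then show ?thesis unfolding T_def u_def by simp
    next
      case False
      have "sum (u 1) (T j) = sum (\<lambda>_. 1) (T j)"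
        by (rule sum.cong) (use LT[OF j False] in \<open>auto simp: u_def\<close>)
      also have "\<dots> = real (card (T j))" by simp
      also have "card (T j) = N" unfolding T_def using False j
        by (auto simp: diff_mult_distrib)
      finally show ?thesis by simp
    qed
  qed
  have img: "(\<lambda>j. sum (u 1) (T j)) ` {1..N} = {real N}" using Tval N by auto
  have le: "mMS N (u 1) M \<le> real N"
    using mMS_le[OF fin N part, of "u 1"] img by simp
  have ge: "real N \<le> mMS N (u 1) M"
  proof (rule mMS_ge[OF fin N])
    fix T' assume T': "is_ordered_partition N M T'"
    have "u 1 L \<le> Max ((\<lambda>j. sum (u 1) (T' j)) ` {1..N})"
      by (rule part_bounds(2)[OF T' fin _ N]) (auto simp: u_def M_def)
    then show "real N \<le> Max ((\<lambda>j. sum (u 1) (T' j)) ` {1..N})" by (simp add: u_def)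
  qed
  have mm: "mMS N (u 1) M = real N" using le ge by simp
  have "sum (u 1) (rr_bundle N xs 1) = (2 - 1 / real N) * mMS N (u 1) M \<and> mMS N (u 1) M > 0"
    unfolding mm sb using N by (simp add: field_simps)
  then show ?thesis
    apply (intro exI[of _ M] exI[of _ u] exI[of _ xs] exI[of _ 1])
    using fin nn run N by simp
qed

theorem proposition6:
  shows "(\<forall>(N::nat) (M::'a set) (u::nat \<Rightarrow> 'a \<Rightarrow> real) xs.
            N \<ge> 1 \<and> finite M \<and> M \<noteq> {} \<and> (\<forall>i\<in>{1..N}. \<forall>j\<in>M. u i j \<ge> 0) \<and>
            rr_greedy_run N M u xs \<longrightarrow>
            (\<forall>i\<in>{1..N}. sum (u i) (rr_bundle N xs i) \<le> (2 - 1 / real N) * mMS N (u i) M))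
       \<and> (\<forall>N::nat. N \<ge> 1 \<longrightarrow>
            (\<exists>(M::nat set) (u::nat \<Rightarrow> nat \<Rightarrow> real) xs i.
               finite M \<and> (\<forall>i\<in>{1..N}. \<forall>j\<in>M. u i j \<ge> 0) \<and>
               rr_greedy_run N M u xs \<and> i \<in> {1..N} \<and>
               sum (u i) (rr_bundle N xs i) = (2 - 1 / real N) * mMS N (u i) M \<and>
               mMS N (u i) M > 0))"
  using part1 part2 by blast

end
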